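(* Let $\varepsilon,\lambda>0$, $q\in\mathbb R$, let $P$, $p_1$, $p_{10}=-\lambda/(2\varepsilon)$ be as in the context, and let $$K(x,y)=-\frac{\lambda}{\varepsilon}x\,\frac{I_1\big(\sqrt{\lambda(x^2-y^2)/\varepsilon}\big)}{\sqrt{\lambda(x^2-y^2)/\varepsilon}},\qquad 0\le y\le x\le1 .$$ Then $K$ satisfies $K_{xx}-K_{yy}=\frac{\lambda}{\varepsilon}K$, $K_y(x,0)=0$, $K(x,x)=-\frac{\lambda}{2\varepsilon}x$, and, with the control law $$U(t)=\int_0^1\big(rK(1,y)+K_x(1,y)\big)\hat u(y,t)\,dy,\qquad r=q-\frac{\lambda}{2\varepsilon},$$ the transformation $\hat w(x,t)=\hat u(x,t)-\int_0^xK(x,y)\hat u(y,t)dy$ maps (classical) solutions of the observer system into solutions of $$\hat w_t=\varepsilon\hat w_{xx}+g(x)\tilde w(0,t),\quad \hat w_x(0,t)=-\frac{\lambda}{2\varepsilon}\tilde w(0,t),\quad \hat w_x(1,t)=-r\hat w(1,t),$$ where $g(x)=p_1(x)-\frac{\lambda}{2}K(x,0)-\int_0^xK(x,y)p_1(y)dy$ and $\tilde w$ is related to $\tilde u=u-\hat u$ by $\tilde u(x,t)=\tilde w(x,t)-\int_0^xP(x,y)\tilde w(y,t)dy$.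
   Context: $I_m$ is the modified Bessel function of the first kind of order $m$ (with $I_1(z)/z\to1/2$ as $z\to0$). The kernel $P$ is defined for $0\le y\le x\le 1$ by $$P(x,y)=\frac{q\lambda/\varepsilon}{\sqrt{\lambda/\varepsilon+q^2}}\int_0^{x-y}e^{-q\tau/2}I_0\Big(\sqrt{\lambda(2-x-y)(x-y-\tau)/\varepsilon}\Big)\sinh\Big(\tfrac{\sqrt{\lambda/\varepsilon+q^2}}{2}\tau\Big)d\tau-\frac{\lambda}{\varepsilon}(1-y)\frac{I_1\big(\sqrt{\lambda((1-y)^2-(1-x)^2)/\varepsilon}\big)}{\sqrt{\lambda((1-y)^2-(1-x)^2)/\varepsilon}},$$ and $p_1(x)=\varepsilon P_y(x,0)$, $p_{10}=P(0,0)=-\lambda/(2\varepsilon)$. Plant: $u_t=\varepsilon u_{xx}+\lambda u$, $u_x(0,t)=0$, $u_x(1,t)+qu(1,t)=U(t)$. Observer (measurement $u(0,t)$): $\hat u_t=\varepsilon\hat u_{xx}+\lambda\hat u+p_1(x)(u(0,t)-\hat u(0,t))$, $\hat u_x(0,t)=p_{10}(u(0,t)-\hat u(0,t))$, $\hat u_x(1,t)+q\hat u(1,t)=U(t)$. *)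

theory Defs
  imports "HOL-Analysis.Analysis"
begin

definition besselI :: "nat \<Rightarrow> real \<Rightarrow> real" where
  "besselI m z = (\<Sum>k. (z / 2) ^ (2 * k + m) / (fact k * fact (k + m)))"

text \<open>I_1(z)/z, continuously extended by 1/2 at z = 0.\<close>
definition besselI1_div :: "real \<Rightarrow> real" where
  "besselI1_div z = (if z = 0 then 1 / 2 else besselI 1 z / z)"

definition kerP :: "real \<Rightarrow> real \<Rightarrow> real \<Rightarrow> real \<Rightarrow> real \<Rightarrow> real" where
  "kerP eps lam q x y =
     (q * lam / eps) / sqrt (lam / eps + q^2) *
       integral {0..x - y} (\<lambda>\<tau>. exp (- q * \<tau> / 2)
          * besselI 0 (sqrt (lam * (2 - x - y) * (x - y - \<tau>) / eps))
          * sinh (sqrt (lam / eps + q^2) / 2 * \<tau>))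
     - (lam / eps) * (1 - y) * besselI1_div (sqrt (lam * ((1 - y)^2 - (1 - x)^2) / eps))"

definition obs_p1 :: "real \<Rightarrow> real \<Rightarrow> real \<Rightarrow> real \<Rightarrow> real" where
  "obs_p1 eps lam q x = eps * deriv (\<lambda>y. kerP eps lam q x y) 0"

definition kerK :: "real \<Rightarrow> real \<Rightarrow> real \<Rightarrow> real \<Rightarrow> real" where
  "kerK eps lam x y = - (lam / eps) * x * besselI1_div (sqrt (lam * (x^2 - y^2) / eps))"

definition gfun :: "real \<Rightarrow> real \<Rightarrow> real \<Rightarrow> real \<Rightarrow> real" where
  "gfun eps lam q x = obs_p1 eps lam q x - lam / 2 * kerK eps lam x 0
      - integral {0..x} (\<lambda>y. kerK eps lam x y * obs_p1 eps lam q y)"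

definition classical_sol ::
  "(real \<Rightarrow> real \<Rightarrow> real) \<Rightarrow> (real \<Rightarrow> real \<Rightarrow> real) \<Rightarrow> (real \<Rightarrow> real \<Rightarrow> real)
     \<Rightarrow> (real \<Rightarrow> real \<Rightarrow> real) \<Rightarrow> bool" where
  "classical_sol v vx vxx vt \<longleftrightarrow>
     (\<forall>x\<in>{0..1}. \<forall>t>0.
        ((\<lambda>s. v s t) has_real_derivative vx x t) (at x within {0..1}) \<and>
        ((\<lambda>s. vx s t) has_real_derivative vxx x t) (at x within {0..1}) \<and>
        ((\<lambda>s. v x s) has_real_derivative vt x t) (at t)) \<and>
     continuous_on ({0..1} \<times> {0<..}) (\<lambda>(x, t). v x t) \<and>
     continuous_on ({0..1} \<times> {0<..}) (\<lambda>(x, t). vx x t) \<and>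
     continuous_on ({0..1} \<times> {0<..}) (\<lambda>(x, t). vxx x t) \<and>
     continuous_on ({0..1} \<times> {0<..}) (\<lambda>(x, t). vt x t)"

end

theory Submission
  imports Defs
begin


definition Fc :: "nat \<Rightarrow> real" where "Fc k = 1 / (2 * 4^k * fact k * fact (k+1))"
definition FF :: "real \<Rightarrow> real" where "FF z = (\<Sum>k. Fc k * z^k)"
definition FF1 :: "real \<Rightarrow> real" where "FF1 z = (\<Sum>k. diffs Fc k * z^k)"
definition FF2 :: "real \<Rightarrow> real" where "FF2 z = (\<Sum>k. diffs (diffs Fc) k * z^k)"

lemma Fc_summable: "summable (\<lambda>n. Fc n * z^n)"
proof (rule summable_comparison_test')
  show "summable (\<lambda>n. inverse (fact n) * \<bar>z\<bar>^n)" by (rule summable_exp)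
  fix n :: nat
  have "Fc n \<le> inverse (fact n)"
  proof -
    have g: "\<And>P f g::real. P \<ge> 1 \<Longrightarrow> f \<ge> 1 \<Longrightarrow> g \<ge> 1 \<Longrightarrow> 1 / (2 * P * f * g) \<le> inverse f"
    proof -
      fix P f g :: real assume h: "P \<ge> 1" "f \<ge> 1" "g \<ge> 1"
      have "1 \<le> P * g" using h by (metis mult_mono' mult_1 zero_le_one)
      then have "1 \<le> 2 * P * g" by linarith
      then have "f * 1 \<le> f * (2 * P * g)" using h by (intro mult_left_mono) auto
      then have "f \<le> 2 * P * f * g" by (simp add: algebra_simps)
      then show "1 / (2 * P * f * g) \<le> inverse f" using h
        by (simp add: field_simps)
    qed
    show ?thesis unfolding Fc_def by (rule g[OF _ fact_ge_1 fact_ge_1]) simp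
  qed
  moreover have "Fc n \<ge> 0" unfolding Fc_def by simp
  ultimately show "norm (Fc n * z^n) \<le> inverse (fact n) * \<bar>z\<bar>^n"
    by (simp add: abs_mult power_abs mult_right_mono)
qed

lemma Fc1_summable: "summable (\<lambda>n. diffs Fc n * z^n)"
  by (rule termdiff_converges_all) (rule Fc_summable)
lemma Fc2_summable: "summable (\<lambda>n. diffs (diffs Fc) n * z^n)"
  by (rule termdiff_converges_all) (rule Fc1_summable)

lemma FF_deriv: "(FF has_real_derivative FF1 z) (at z)"
  unfolding FF_def FF1_def by (rule termdiffs_strong_converges_everywhere) (rule Fc_summable)
lemma FF1_deriv: "(FF1 has_real_derivative FF2 z) (at z)"
  unfolding FF1_def FF2_def by (rule termdiffs_strong_converges_everywhere) (rule Fc1_summable)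

lemma Fc_rec: "4 * real (Suc n) * real (Suc (Suc n)) * Fc (Suc n) = Fc n"
proof -
  have f1: "(fact (Suc n) :: real) = real (Suc n) * fact n" by (simp add: fact_Suc)
  have f2: "(fact (Suc (Suc n)) :: real) = real (Suc (Suc n)) * (real (Suc n) * fact n)" by (simp add: fact_Suc)
  have p: "(4::real)^(Suc n) = 4 * 4^n" by simp
  have pos: "(fact n::real) > 0" "real (Suc n) > 0" "real (Suc (Suc n)) > 0" "(4::real)^n > 0" by auto
  have g: "\<And>P f a b::real. P > 0 \<Longrightarrow> f > 0 \<Longrightarrow> a > 0 \<Longrightarrow> b > 0 \<Longrightarrow>
     4 * a * b * (1 / (2 * (4 * P) * (a * f) * (b * (a * f)))) = 1 / (2 * P * f * (a * f))"
    by (simp add: field_simps)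
  show ?thesis unfolding Fc_def Suc_eq_plus1[symmetric] f1 f2 p using g[OF pos(4) pos(1) pos(2) pos(3)] by simp
qed

lemma FF_ode: "4 * z * FF2 z + 8 * FF1 z = FF z"
proof -
  have s0: "(\<lambda>n. Fc n * z^n - 8 * (diffs Fc n * z^n)) sums (FF z - 8 * FF1 z)"
    unfolding FF_def FF1_def
    by (intro sums_diff sums_mult summable_sums Fc_summable Fc1_summable)
  have "(\<lambda>n. Fc (Suc n) * z^(Suc n) - 8 * (diffs Fc (Suc n) * z^(Suc n))) sums (FF z - 8 * FF1 z)"
  proof -
    have "Fc 0 * z^0 - 8 * (diffs Fc 0 * z^0) = 0"
      by (simp add: Fc_def diffs_def)
    then show ?thesis using s0 sums_Suc_iff[where f="\<lambda>n. Fc n * z^n - 8 * (diffs Fc n * z^n)"] by simp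
  qed
  moreover have "(\<lambda>n. Fc (Suc n) * z^(Suc n) - 8 * (diffs Fc (Suc n) * z^(Suc n)))
      = (\<lambda>n. 4 * z * (diffs (diffs Fc) n * z^n))"
  proof
    fix n
    have e: "Fc (Suc n) = 4 * real (Suc (Suc n)) * real (Suc (Suc (Suc n))) * Fc (Suc (Suc n))"
      using Fc_rec[of "Suc n"] by simp
    show "Fc (Suc n) * z^(Suc n) - 8 * (diffs Fc (Suc n) * z^(Suc n)) = 4 * z * (diffs (diffs Fc) n * z^n)"
      unfolding diffs_def e by (simp add: algebra_simps)
  qed
  moreover have "(\<lambda>n. 4 * z * (diffs (diffs Fc) n * z^n)) sums (4 * z * FF2 z)"
    unfolding FF2_def by (intro sums_mult summable_sums Fc2_summable)
  ultimately have "FF z - 8 * FF1 z = 4 * z * FF2 z" using sums_unique2 by metis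
  then show ?thesis by simp
qed

lemma FF_0: "FF 0 = 1/2"
proof -
  have "FF 0 = (\<Sum>k. Fc k * 0^k)" by (simp add: FF_def)
  also have "\<dots> = Fc 0" using powser_zero[of Fc] by simp
  finally show ?thesis by (simp add: Fc_def)
qed

lemma besselI1_div_FF: assumes "a \<ge> 0" shows "besselI1_div (sqrt a) = FF a"
proof (cases "a = 0")
  case True then show ?thesis by (simp add: besselI1_div_def FF_0)
next
  case False
  let ?s = "sqrt a"
  have s: "?s > 0" using assms False by simp
  have "(\<lambda>k. Fc k * a^k) sums FF a" unfolding FF_def by (intro summable_sums Fc_summable)
  then have "(\<lambda>k. ?s * (Fc k * a^k)) sums (?s * FF a)" by (rule sums_mult)
  moreover have "(\<lambda>k. ?s * (Fc k * a^k)) = (\<lambda>k. (?s / 2) ^ (2 * k + 1) / (fact k * fact (k + 1)))"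
  proof
    fix k
    have e0: "?s * ?s = a" using assms by simp
    have e1: "?s^k * ?s^k = a^k" using assms by (simp add: power_mult_distrib[symmetric] e0 abs_of_nonneg)
    have e2: "(4::real)^k = 2^k * 2^k" using power_mult_distrib[of "2::real" 2 k] by simp
    have e3: "(?s / 2) ^ (2 * k + 1) = ?s * (?s^k * ?s^k) / (2 * (2^k * 2^k))"
      by (simp add: power_add power_mult power2_eq_square power_divide power_mult_distrib field_simps)
    show "?s * (Fc k * a^k) = (?s / 2) ^ (2 * k + 1) / (fact k * fact (k + 1))"
      unfolding Fc_def e3 e1 e2 by simp
  qed
  ultimately have "besselI 1 ?s = ?s * FF a" unfolding besselI_def by (simp add: sums_iff)
  then show ?thesis using s by (simp add: besselI1_div_def)
qed



lemma FF_chain [derivative_intros]: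
  assumes "(g has_real_derivative g') (at x within S)" shows "((\<lambda>x. FF (g x)) has_real_derivative FF1 (g x) * g') (at x within S)"
  using DERIV_chain[OF FF_deriv[of "g x"] assms] by (simp add: o_def)
lemma FF1_chain [derivative_intros]:
  assumes "(g has_real_derivative g') (at x within S)" shows "((\<lambda>x. FF1 (g x)) has_real_derivative FF2 (g x) * g') (at x within S)"
  using DERIV_chain[OF FF1_deriv[of "g x"] assms] by (simp add: o_def)

lemma FF_cont [continuous_intros]: "continuous_on S g \<Longrightarrow> continuous_on S (\<lambda>x. FF (g x))"
  by (rule continuous_on_compose2[of UNIV FF]) (auto intro: DERIV_isCont[OF FF_deriv] continuous_at_imp_continuous_on)
lemma FF1_cont [continuous_intros]: "continuous_on S g \<Longrightarrow> continuous_on S (\<lambda>x. FF1 (g x))"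
  by (rule continuous_on_compose2[of UNIV FF1]) (auto intro: DERIV_isCont[OF FF1_deriv] continuous_at_imp_continuous_on)
lemma FF2_cont [continuous_intros]: "continuous_on S g \<Longrightarrow> continuous_on S (\<lambda>x. FF2 (g x))"
proof -
  have "continuous_on UNIV FF2"
  proof -
    have d: "(FF2 has_real_derivative (\<Sum>k. diffs (diffs (diffs Fc)) k * z^k)) (at z)" for z
      unfolding FF2_def by (rule termdiffs_strong_converges_everywhere) (rule Fc2_summable)
    show ?thesis by (auto intro: DERIV_isCont[OF d] continuous_at_imp_continuous_on)
  qed
  then show "continuous_on S g \<Longrightarrow> continuous_on S (\<lambda>x. FF2 (g x))"
    by (rule continuous_on_compose2) auto
qed

definition Kt :: "real \<Rightarrow> real \<Rightarrow> real \<Rightarrow> real" where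
  "Kt c x y = - c * x * FF (c * (x^2 - y^2))"
definition Ktx :: "real \<Rightarrow> real \<Rightarrow> real \<Rightarrow> real" where
  "Ktx c x y = - c * FF (c * (x^2 - y^2)) - 2 * c^2 * x^2 * FF1 (c * (x^2 - y^2))"
definition Ktxx :: "real \<Rightarrow> real \<Rightarrow> real \<Rightarrow> real" where
  "Ktxx c x y = - 6 * c^2 * x * FF1 (c * (x^2 - y^2)) - 4 * c^3 * x^3 * FF2 (c * (x^2 - y^2))"
definition Kty :: "real \<Rightarrow> real \<Rightarrow> real \<Rightarrow> real" where
  "Kty c x y = 2 * c^2 * x * y * FF1 (c * (x^2 - y^2))"
definition Ktyy :: "real \<Rightarrow> real \<Rightarrow> real \<Rightarrow> real" where
  "Ktyy c x y = 2 * c^2 * x * FF1 (c * (x^2 - y^2)) - 4 * c^3 * x * y^2 * FF2 (c * (x^2 - y^2))"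

lemma Kt_dx: "((\<lambda>s. Kt c s y) has_real_derivative Ktx c x y) (at x within S)"
  unfolding Kt_def Ktx_def
  by (auto intro!: derivative_eq_intros simp: power2_eq_square algebra_simps)
lemma Ktx_dx: "((\<lambda>s. Ktx c s y) has_real_derivative Ktxx c x y) (at x within S)"
  unfolding Ktx_def Ktxx_def
  by (auto intro!: derivative_eq_intros simp: power2_eq_square power3_eq_cube algebra_simps)
lemma Kt_dy: "((\<lambda>s. Kt c x s) has_real_derivative Kty c x y) (at y within S)"
  unfolding Kt_def Kty_def
  by (auto intro!: derivative_eq_intros simp: power2_eq_square algebra_simps)
lemma Kty_dy: "((\<lambda>s. Kty c x s) has_real_derivative Ktyy c x y) (at y within S)"
  unfolding Kty_def Ktyy_def
  by (auto intro!: derivative_eq_intros simp: power2_eq_square power3_eq_cube algebra_simps)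

lemma Kt_pde: "Ktxx c x y - Ktyy c x y = c * Kt c x y"
proof -
  let ?z = "c * (x^2 - y^2)"
  have hode: "4 * ?z * FF2 ?z + 8 * FF1 ?z = FF ?z" by (rule FF_ode)
  have "Ktxx c x y - Ktyy c x y = - (c^2) * x * (4 * ?z * FF2 ?z + 8 * FF1 ?z)"
    unfolding Ktxx_def Ktyy_def by (simp add: power2_eq_square power3_eq_cube algebra_simps)
  also have "\<dots> = c * Kt c x y" unfolding hode Kt_def by (simp add: power2_eq_square)
  finally show ?thesis .
qed

lemma Kt_diag: "Kt c x x = - c * x / 2" by (simp add: Kt_def FF_0)
lemma Kty_0: "Kty c x 0 = 0" by (simp add: Kty_def)
lemma Ktxy_diag: "Ktx c x x + Kty c x x = - c / 2"
  by (simp add: Ktx_def Kty_def FF_0 power2_eq_square)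

lemma kerK_Kt: assumes "eps > 0" "lam \<ge> 0" "y^2 \<le> x^2"
  shows "kerK eps lam x y = Kt (lam/eps) x y"
proof -
  have "lam * (x^2 - y^2) / eps \<ge> 0" using assms by simp
  then show ?thesis unfolding kerK_def Kt_def
    by (simp add: besselI1_div_FF)
qed

lemma kerK_Kt': assumes "eps > 0" "lam \<ge> 0" "0 \<le> y" "y \<le> x"
  shows "kerK eps lam x y = Kt (lam/eps) x y"
  using assms by (intro kerK_Kt) (auto intro: power_mono)

lemma Kt_cont [continuous_intros]:
  "continuous_on S f \<Longrightarrow> continuous_on S g \<Longrightarrow> continuous_on S (\<lambda>p. Kt c (f p) (g p))"
  unfolding Kt_def by (intro continuous_intros)
lemma Ktx_cont [continuous_intros]:
  "continuous_on S f \<Longrightarrow> continuous_on S g \<Longrightarrow> continuous_on S (\<lambda>p. Ktx c (f p) (g p))"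
  unfolding Ktx_def by (intro continuous_intros)
lemma Ktxx_cont [continuous_intros]:
  "continuous_on S f \<Longrightarrow> continuous_on S g \<Longrightarrow> continuous_on S (\<lambda>p. Ktxx c (f p) (g p))"
  unfolding Ktxx_def by (intro continuous_intros)
lemma Kty_cont [continuous_intros]:
  "continuous_on S f \<Longrightarrow> continuous_on S g \<Longrightarrow> continuous_on S (\<lambda>p. Kty c (f p) (g p))"
  unfolding Kty_def by (intro continuous_intros)
lemma Ktyy_cont [continuous_intros]:
  "continuous_on S f \<Longrightarrow> continuous_on S g \<Longrightarrow> continuous_on S (\<lambda>p. Ktyy c (f p) (g p))"
  unfolding Ktyy_def by (intro continuous_intros)

lemma part123:
  fixes eps lam :: real
  assumes "eps > 0" and "lam > 0"
  shows
   "(\<forall>x y. 0 < y \<and> y < x \<and> x < 1 \<longrightarrow>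
       (\<lambda>s. kerK eps lam s y) differentiable (at x) \<and>
       (\<lambda>s. deriv (\<lambda>s'. kerK eps lam s' y) s) differentiable (at x) \<and>
       (\<lambda>s. kerK eps lam x s) differentiable (at y) \<and>
       (\<lambda>s. deriv (\<lambda>s'. kerK eps lam x s') s) differentiable (at y) \<and>
       deriv (\<lambda>s. deriv (\<lambda>s'. kerK eps lam s' y) s) x
         - deriv (\<lambda>s. deriv (\<lambda>s'. kerK eps lam x s') s) y
         = lam / eps * kerK eps lam x y)
    \<and> (\<forall>x\<in>{0..1}. (\<lambda>s. kerK eps lam x s) differentiable (at 0) \<and>
                    deriv (\<lambda>s. kerK eps lam x s) 0 = 0)
    \<and> (\<forall>x\<in>{0..1}. kerK eps lam x x = - (lam / (2 * eps)) * x)"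
proof -
  define c where "c = lam / eps"
  have l0: "lam \<ge> 0" using assms by simp
  have P1: "(\<lambda>s. kerK eps lam s y) differentiable (at x) \<and>
       (\<lambda>s. deriv (\<lambda>s'. kerK eps lam s' y) s) differentiable (at x) \<and>
       (\<lambda>s. kerK eps lam x s) differentiable (at y) \<and>
       (\<lambda>s. deriv (\<lambda>s'. kerK eps lam x s') s) differentiable (at y) \<and>
       deriv (\<lambda>s. deriv (\<lambda>s'. kerK eps lam s' y) s) x
         - deriv (\<lambda>s. deriv (\<lambda>s'. kerK eps lam x s') s) y
         = lam / eps * kerK eps lam x y" if h: "0 < y \<and> y < x \<and> x < 1" for x y
  proof -
    have eqx: "kerK eps lam s y = Kt c s y" if "s \<in> {y<..}" for s
      unfolding c_def using that h by (intro kerK_Kt'[OF assms(1) l0]) auto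
    have eqy: "kerK eps lam x s = Kt c x s" if "s \<in> {-x<..<x}" for s
      unfolding c_def using that h assms by (intro kerK_Kt[OF assms(1) l0]) (auto simp: abs_le_square_iff[symmetric])
    have dx: "deriv (\<lambda>s'. kerK eps lam s' y) s = Ktx c s y" if "s \<in> {y<..}" for s
      by (rule DERIV_imp_deriv, rule has_field_derivative_transform_within_open[OF Kt_dx _ that]) (auto simp: eqx)
    have dy: "deriv (\<lambda>s'. kerK eps lam x s') s = Kty c x s" if "s \<in> {-x<..<x}" for s
      by (rule DERIV_imp_deriv, rule has_field_derivative_transform_within_open[OF Kt_dy _ that]) (auto simp: eqy)
    have xin: "x \<in> {y<..}" and yin: "y \<in> {-x<..<x}" using h by auto
    have D1: "((\<lambda>s. kerK eps lam s y) has_real_derivative Ktx c x y) (at x)"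
      by (rule has_field_derivative_transform_within_open[OF Kt_dx _ xin]) (auto simp: eqx)
    have D2: "((\<lambda>s. deriv (\<lambda>s'. kerK eps lam s' y) s) has_real_derivative Ktxx c x y) (at x)"
      by (rule has_field_derivative_transform_within_open[OF Ktx_dx _ xin]) (auto simp: dx)
    have D3: "((\<lambda>s. kerK eps lam x s) has_real_derivative Kty c x y) (at y)"
      by (rule has_field_derivative_transform_within_open[OF Kt_dy _ yin]) (auto simp: eqy)
    have D4: "((\<lambda>s. deriv (\<lambda>s'. kerK eps lam x s') s) has_real_derivative Ktyy c x y) (at y)"
      by (rule has_field_derivative_transform_within_open[OF Kty_dy _ yin]) (auto simp: dy)
    show "(\<lambda>s. kerK eps lam s y) differentiable (at x) \<and>
       (\<lambda>s. deriv (\<lambda>s'. kerK eps lam s' y) s) differentiable (at x) \<and>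
       (\<lambda>s. kerK eps lam x s) differentiable (at y) \<and>
       (\<lambda>s. deriv (\<lambda>s'. kerK eps lam x s') s) differentiable (at y) \<and>
       deriv (\<lambda>s. deriv (\<lambda>s'. kerK eps lam s' y) s) x
         - deriv (\<lambda>s. deriv (\<lambda>s'. kerK eps lam x s') s) y
         = lam / eps * kerK eps lam x y"
    proof (intro conjI)
      show "(\<lambda>s. kerK eps lam s y) differentiable (at x)" using D1 real_differentiable_def by blast
      show "(\<lambda>s. deriv (\<lambda>s'. kerK eps lam s' y) s) differentiable (at x)" using D2 real_differentiable_def by blast
      show "(\<lambda>s. kerK eps lam x s) differentiable (at y)" using D3 real_differentiable_def by blast
      show "(\<lambda>s. deriv (\<lambda>s'. kerK eps lam x s') s) differentiable (at y)" using D4 real_differentiable_def by blast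
      show "deriv (\<lambda>s. deriv (\<lambda>s'. kerK eps lam s' y) s) x
         - deriv (\<lambda>s. deriv (\<lambda>s'. kerK eps lam x s') s) y = lam / eps * kerK eps lam x y"
        using DERIV_imp_deriv[OF D2] DERIV_imp_deriv[OF D4] Kt_pde[of c x y] eqx[OF xin] c_def by simp
    qed
  qed
  have P2: "(\<lambda>s. kerK eps lam x s) differentiable (at 0) \<and> deriv (\<lambda>s. kerK eps lam x s) 0 = 0"
     if x: "x \<in> {0..1}" for x
    proof (cases "x = 0")
      case True
      have "(\<lambda>s. kerK eps lam x s) = (\<lambda>s. 0)" using True by (simp add: kerK_def fun_eq_iff)
      then show ?thesis by simp
    next
      case False
      then have xp: "x > 0" using x by simp
      have eqy: "kerK eps lam x s = Kt c x s" if "s \<in> {-x<..<x}" for s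
        unfolding c_def using that xp by (intro kerK_Kt[OF assms(1) l0]) (auto simp: abs_le_square_iff[symmetric])
      have "((\<lambda>s. kerK eps lam x s) has_real_derivative Kty c x 0) (at 0)"
        by (rule has_field_derivative_transform_within_open[OF Kt_dy, where S="{-x<..<x}"]) (use xp in \<open>auto simp: eqy\<close>)
      then show ?thesis using DERIV_imp_deriv Kty_0 real_differentiable_def by metis
    qed
  have P3: "kerK eps lam x x = - (lam / (2 * eps)) * x" for x
    by (simp add: kerK_def besselI1_div_def)
  show ?thesis using P1 P2 P3 by blast
qed



lemma vd:
  fixes G Gx :: "real \<Rightarrow> real \<Rightarrow> real"
  assumes d: "\<And>a y. a \<in> {0..1} \<Longrightarrow> y \<in> {0..1} \<Longrightarrow> ((\<lambda>a. G a y) has_real_derivative Gx a y) (at a within {0..1})"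
  and cG: "continuous_on ({0..1}\<times>{0..1}) (\<lambda>(a,y). G a y)"
  and cGx: "continuous_on ({0..1}\<times>{0..1}) (\<lambda>(a,y). Gx a y)"
  and x: "x \<in> {0..1}"
  shows "((\<lambda>x. integral {0..x} (G x)) has_real_derivative (G x x + integral {0..x} (Gx x))) (at x within {0..1})"
proof -
  define \<Phi> where "\<Phi> a b = integral {0..b} (G a)" for a b
  have cG1: "continuous_on {0..1} (G a)" if "a \<in> {0..1}" for a
    by (rule continuous_on_compose2[OF cG, where f="\<lambda>y. (a, y)", simplified]) (use that in \<open>auto intro!: continuous_intros\<close>)
  have sub: "{0..x} \<subseteq> {0..1}" using x by auto
  have fx: "((\<lambda>a. \<Phi> a x) has_real_derivative integral {0..x} (Gx x)) (at x within {0..1})"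
    unfolding \<Phi>_def
  proof -
    have "((\<lambda>a. integral (cbox 0 x) (G a)) has_real_derivative integral (cbox 0 x) (Gx x)) (at x within {0..1})"
    proof (rule leibniz_rule_field_derivative)
      show "((\<lambda>a. G a t) has_real_derivative Gx a t) (at a within {0..1})" if "a \<in> {0..1}" "t \<in> cbox 0 x" for a t
        using d that sub by auto
      show "G a integrable_on cbox 0 x" if "a \<in> {0..1}" for a
        using integrable_continuous_real[OF continuous_on_subset[OF cG1[OF that] sub]] by simp
      show "continuous_on ({0..1} \<times> cbox 0 x) (\<lambda>(a, t). Gx a t)"
        by (rule continuous_on_subset[OF cGx]) (use sub in auto)
    qed (use x in auto)
    then show "((\<lambda>a. integral {0..x} (G a)) has_real_derivative integral {0..x} (Gx x)) (at x within {0..1})" by simp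
  qed
  have P: "((\<lambda>(a, b). \<Phi> a b) has_derivative (\<lambda>(ta, tb). ta * integral {0..x} (Gx x) + blinfun_mult_right (G x x) tb)) (at (x, x) within {0..1} \<times> {0..1})"
  proof (rule has_derivative_partialsI[where fy="\<lambda>a b. blinfun_mult_right (G a b)" and fx="\<lambda>ta. ta * integral {0..x} (Gx x)"])
    show "((\<lambda>a. \<Phi> a x) has_derivative (\<lambda>ta. ta * integral {0..x} (Gx x))) (at x within {0..1})"
      using fx unfolding has_field_derivative_def by (rule has_derivative_eq_rhs) (simp add: fun_eq_iff mult.commute)
    show "((\<lambda>b. \<Phi> a b) has_derivative blinfun_apply (blinfun_mult_right (G a b))) (at b within {0..1})"
      if "a \<in> {0..1}" "b \<in> {0..1}" for a b
      using integral_has_real_derivative[OF cG1[OF that(1)] that(2)]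
      unfolding \<Phi>_def by (simp add: has_field_derivative_def mult.commute)
    have "continuous_on ({0..1} \<times> {0..1}) (\<lambda>(a, b). blinfun_mult_right (G a b))"
      using cG by (auto simp: split_beta intro!: continuous_intros)
    then show "continuous (at (x, x) within {0..1} \<times> {0..1}) (\<lambda>(a, b). blinfun_mult_right (G a b))"
      using x by (simp add: continuous_on_eq_continuous_within)
  qed (use x in auto)
  have D: "((\<lambda>s. (s, s)) has_derivative (\<lambda>h. (h, h))) (at x within {0..1})"
    by (auto intro!: derivative_eq_intros)
  have P': "((\<lambda>(a, b). \<Phi> a b) has_derivative (\<lambda>(ta, tb). ta * integral {0..x} (Gx x) + blinfun_mult_right (G x x) tb)) (at ((\<lambda>s. (s, s)) x) within (\<lambda>s. (s, s)) ` {0..1})"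
    by (rule has_derivative_subset[OF P]) auto
  have "((\<lambda>s. \<Phi> s s) has_derivative (\<lambda>h. h * integral {0..x} (Gx x) + G x x * h)) (at x within {0..1})"
    using diff_chain_within[OF D P'] by (simp add: o_def)
  then show ?thesis unfolding \<Phi>_def has_field_derivative_def
    by (rule has_derivative_eq_rhs) (auto simp: algebra_simps fun_eq_iff)
qed

lemma integral_scale01:
  fixes f :: "real \<Rightarrow> real"
  assumes "continuous_on {0..x} f" "x \<ge> 0"
  shows "integral {0..x} f = x * integral {0..1} (\<lambda>s. f (x * s))"
proof (cases "x = 0")
  case True then show ?thesis by simp
next
  case False
  then have xp: "x > 0" using assms by simp
  have "(f has_integral integral {0..x} f) (cbox 0 x)"
    using integrable_continuous_real[OF assms(1)] by (simp add: integrable_integral)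
  from has_integral_affinity'[OF this xp, of 0]
  have "((\<lambda>s. f (x * s)) has_integral integral {0..x} f / x) {0..1}"
    using xp by (simp add: divide_inverse mult.commute)
  then have "integral {0..1} (\<lambda>s. f (x * s)) = integral {0..x} f / x" by (rule integral_unique)
  then show ?thesis using xp by simp
qed

lemma vc:
  fixes h :: "real \<Rightarrow> real \<Rightarrow> 'a::topological_space \<Rightarrow> real"
  assumes c: "continuous_on ({0..1}\<times>{0..1}\<times>T) (\<lambda>(x,y,t). h x y t)"
  shows "continuous_on ({0..1}\<times>T) (\<lambda>(x,t). integral {0..x} (\<lambda>y. h x y t))"
proof -
  have eq: "integral {0..x} (\<lambda>y. h x y t) = x * integral (cbox 0 1) (\<lambda>s. h x (x * s) t)"
    if "(x, t) \<in> {0..1}\<times>T" for x t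
  proof -
    have "continuous_on {0..x} (\<lambda>y. h x y t)"
      by (rule continuous_on_compose2[OF c, where f="\<lambda>y. (x, y, t)", simplified]) (use that in \<open>auto intro!: continuous_intros\<close>)
    then show ?thesis using integral_scale01[of x "\<lambda>y. h x y t"] that by simp
  qed
  have "continuous_on ({0..1}\<times>T) (\<lambda>p. fst p * integral (cbox 0 1) (\<lambda>s. h (fst p) (fst p * s) (snd p)))"
  proof (intro continuous_intros)
    show "continuous_on ({0..1}\<times>T) (\<lambda>p. integral (cbox 0 1) (\<lambda>s. h (fst p) (fst p * s) (snd p)))"
    proof (rule integral_continuous_on_param)
      show "continuous_on (({0..1}\<times>T) \<times> cbox 0 (1::real)) (\<lambda>(p, s). h (fst p) (fst p * s) (snd p))"
      proof -
        have "continuous_on (({0..1}\<times>T) \<times> cbox 0 (1::real)) (\<lambda>z. (\<lambda>(x,y,t). h x y t) ((\<lambda>(p, s). (fst p, fst p * s, snd p)) z))"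
        proof (rule continuous_on_compose2[OF c])
          show "continuous_on (({0..1}\<times>T) \<times> cbox 0 (1::real)) (\<lambda>(p, s). (fst p, fst p * s, snd p))"
            unfolding split_beta by (intro continuous_on_Pair continuous_on_mult continuous_on_fst continuous_on_snd continuous_on_id)
          show "(\<lambda>(p, s). (fst p, fst p * s, snd p)) ` (({0..1}\<times>T) \<times> cbox 0 (1::real)) \<subseteq> {0..1}\<times>{0..1}\<times>T"
            by (auto intro: mult_le_one)
        qed
        then show ?thesis by (simp add: split_beta)
      qed
    qed
  qed
  then show ?thesis
    by (rule continuous_on_eq) (use eq in \<open>auto simp: split_beta\<close>)
qed



lemma int_dx:
  fixes v :: "real \<Rightarrow> real"
  fixes k kx :: "real \<Rightarrow> real \<Rightarrow> real"
  assumes dk: "\<And>a y. ((\<lambda>a. k a y) has_real_derivative kx a y) (at a)"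
  and ck: "continuous_on UNIV (\<lambda>(a,y). k a y)" and ckx: "continuous_on UNIV (\<lambda>(a,y). kx a y)"
  and cv: "continuous_on {0..1} v" and x: "x \<in> {0..1}"
  shows "((\<lambda>x. integral {0..x} (\<lambda>y. k x y * v y)) has_real_derivative (k x x * v x + integral {0..x} (\<lambda>y. kx x y * v y))) (at x within {0..1})"
proof -
  have cv2: "continuous_on ({0..1}\<times>{0..1}) (\<lambda>p. v (snd p))"
    by (rule continuous_on_compose2[OF cv]) (auto intro: continuous_intros)
  have ck2: "continuous_on ({0..1}\<times>{0..1}) (\<lambda>p. k (fst p) (snd p))"
    using continuous_on_subset[OF ck] by (simp add: split_beta)
  have ckx2: "continuous_on ({0..1}\<times>{0..1}) (\<lambda>p. kx (fst p) (snd p))"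
    using continuous_on_subset[OF ckx] by (simp add: split_beta)
  show ?thesis
  proof (rule vd[where G="\<lambda>a y. k a y * v y" and Gx="\<lambda>a y. kx a y * v y", OF _ _ _ x])
    show "((\<lambda>a. k a y * v y) has_real_derivative kx a y * v y) (at a within {0..1})" for a y
      by (rule DERIV_cmult_right[OF has_field_derivative_at_within[OF dk]]) 
    show "continuous_on ({0..1} \<times> {0..1}) (\<lambda>(a, y). k a y * v y)"
      using continuous_on_mult[OF ck2 cv2] by (simp add: split_beta)
    show "continuous_on ({0..1} \<times> {0..1}) (\<lambda>(a, y). kx a y * v y)"
      using continuous_on_mult[OF ckx2 cv2] by (simp add: split_beta)
  qed
qed

lemma cont3:
  fixes v :: "real \<Rightarrow> real \<Rightarrow> real" and k :: "real \<Rightarrow> real \<Rightarrow> real"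
  assumes cv: "continuous_on ({0..1}\<times>{0<..}) (\<lambda>(x,t). v x t)"
  and ck: "continuous_on UNIV (\<lambda>(a,y). k a y)"
  shows "continuous_on ({0..1}\<times>{0..1}\<times>{0<..}) (\<lambda>(x,y,t). k x y * v y t)"
proof -
  have a: "continuous_on ({0..1}\<times>{0..1}\<times>{0<..}) (\<lambda>p. (\<lambda>(x,t). v x t) (fst (snd p), snd (snd p)))"
    by (rule continuous_on_compose2[OF cv]) (auto intro!: continuous_intros)
  have b: "continuous_on ({0..1}\<times>{0..1}\<times>{0<..}) (\<lambda>p. (\<lambda>(a,y). k a y) (fst p, fst (snd p)))"
    by (rule continuous_on_compose2[OF ck]) (auto intro!: continuous_intros)
  show ?thesis using continuous_on_mult[OF b a] by (simp add: split_beta)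
qed

lemma Kt_contU: "continuous_on UNIV (\<lambda>(a,y). Kt c a y)"
  unfolding split_beta by (intro continuous_intros)
lemma Ktx_contU: "continuous_on UNIV (\<lambda>(a,y). Ktx c a y)"
  unfolding split_beta by (intro continuous_intros)
lemma Ktxx_contU: "continuous_on UNIV (\<lambda>(a,y). Ktxx c a y)"
  unfolding split_beta by (intro continuous_intros)



lemma cont_sec:
  fixes v :: "real \<Rightarrow> real \<Rightarrow> real"
  assumes cv: "continuous_on ({0..1}\<times>{0<..}) (\<lambda>(x,t). v x t)" and t: "t > 0"
  shows "continuous_on {0..1} (\<lambda>x. v x t)"
proof -
  have "continuous_on {0..1} (\<lambda>x. (\<lambda>(x,t). v x t) (x, t))"
    by (rule continuous_on_compose2[OF cv]) (use t in \<open>auto intro!: continuous_intros\<close>)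
  then show ?thesis by simp
qed

lemma cont_fs:
  fixes v :: "real \<Rightarrow> real \<Rightarrow> real"
  assumes cv: "continuous_on ({0..1}\<times>{0<..}) (\<lambda>(x,t). v x t)"
  shows "continuous_on ({0..1}\<times>{0<..}) (\<lambda>p. v (fst p) (snd p))"
  using cv by (simp add: split_beta)

lemma vc':
  fixes v :: "real \<Rightarrow> real \<Rightarrow> real" and k :: "real \<Rightarrow> real \<Rightarrow> real"
  assumes cv: "continuous_on ({0..1}\<times>{0<..}) (\<lambda>(x,t). v x t)"
  and ck: "continuous_on UNIV (\<lambda>(a,y). k a y)"
  shows "continuous_on ({0..1}\<times>{0<..}) (\<lambda>p. integral {0..fst p} (\<lambda>y. k (fst p) y * v y (snd p)))"
  using vc[OF cont3[OF cv ck]] by (simp add: split_beta)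

lemma int_cong_K:
  assumes "eps > 0" "lam \<ge> 0" "x \<ge> 0"
  shows "integral {0..x} (\<lambda>y. kerK eps lam x y * f y) = integral {0..x} (\<lambda>y. Kt (lam/eps) x y * f y)"
  by (rule integral_cong) (use assms in \<open>auto simp: kerK_Kt'\<close>)

lemma int_cong_K':
  assumes "eps > 0" "lam \<ge> 0" "x \<ge> 0" "c = lam/eps"
  shows "integral {0..x} (\<lambda>y. kerK eps lam x y * f y) = integral {0..x} (\<lambda>y. Kt c x y * f y)"
  using int_cong_K[OF assms(1-3)] assms(4) by simp

lemma contK_int:
  fixes v :: "real \<Rightarrow> real" and k :: "real \<Rightarrow> real \<Rightarrow> real"
  assumes "continuous_on {0..1} v" "continuous_on UNIV (\<lambda>(a,y). k a y)" "x \<in> {0..1}"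
  shows "(\<lambda>y. k x y * v y) integrable_on {0..x}"
proof -
  have "continuous_on {0..x} v" using assms by (auto elim: continuous_on_subset)
  moreover have "continuous_on {0..x} (\<lambda>y. (\<lambda>(a,y). k a y) (x, y))"
    by (rule continuous_on_compose2[OF assms(2)]) (auto intro!: continuous_intros)
  ultimately show ?thesis by (auto intro!: integrable_continuous_real continuous_intros)
qed



lemma reg:
  fixes eps lam c :: real and uh uhx uhxx uht :: "real \<Rightarrow> real \<Rightarrow> real"
  assumes ep: "eps > 0" and lp: "lam > 0" and cdef: "c = lam / eps"
  and chu: "classical_sol uh uhx uhxx uht"
  shows "classical_sol (\<lambda>x t. uh x t - integral {0..x} (\<lambda>y. kerK eps lam x y * uh y t))
     (\<lambda>x t. uhx x t - (Kt c x x * uh x t + integral {0..x} (\<lambda>y. Ktx c x y * uh y t)))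
     (\<lambda>x t. uhxx x t - ((- c / 2) * uh x t + (- c * x / 2) * uhx x t + (Ktx c x x * uh x t + integral {0..x} (\<lambda>y. Ktxx c x y * uh y t))))
     (\<lambda>x t. uht x t - integral {0..x} (\<lambda>y. Kt c x y * uht y t))"
proof -
  have l0: "lam \<ge> 0" using lp by simp
  note cs = chu[unfolded classical_sol_def]
  have Dx: "((\<lambda>s. uh s t) has_real_derivative uhx x t) (at x within {0..1})"
   and Dxx: "((\<lambda>s. uhx s t) has_real_derivative uhxx x t) (at x within {0..1})"
   and Dt: "((\<lambda>s. uh x s) has_real_derivative uht x t) (at t)"
    if "x \<in> {0..1}" "t > 0" for x t using cs that by auto
  have cuh: "continuous_on ({0..1}\<times>{0<..}) (\<lambda>(x,t). uh x t)"
   and cuhx: "continuous_on ({0..1}\<times>{0<..}) (\<lambda>(x,t). uhx x t)"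
   and cuhxx: "continuous_on ({0..1}\<times>{0<..}) (\<lambda>(x,t). uhxx x t)"
   and cuht: "continuous_on ({0..1}\<times>{0<..}) (\<lambda>(x,t). uht x t)" using cs by auto
  have eqwh: "uh x t - integral {0..x} (\<lambda>y. kerK eps lam x y * uh y t) = uh x t - integral {0..x} (\<lambda>y. Kt c x y * uh y t)"
    if "x \<ge> 0" for x t using int_cong_K'[OF ep l0 that cdef] by simp
  show ?thesis unfolding classical_sol_def
  proof (intro conjI ballI allI impI)
    fix x t :: real assume x: "x \<in> {0..1}" and t: "t > 0"
    have cs1: "continuous_on {0..1} (\<lambda>x. uh x t)" by (rule cont_sec[OF cuh t])
    have cs2: "continuous_on {0..1} (\<lambda>x. uhx x t)" by (rule cont_sec[OF cuhx t])
    have d1: "((\<lambda>s. uh s t - integral {0..s} (\<lambda>y. Kt c s y * uh y t)) has_real_derivative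
        uhx x t - (Kt c x x * uh x t + integral {0..x} (\<lambda>y. Ktx c x y * uh y t))) (at x within {0..1})"
      by (intro DERIV_diff Dx[OF x t] int_dx[OF Kt_dx[where S=UNIV] Kt_contU Ktx_contU cs1 x])
    show "((\<lambda>s. uh s t - integral {0..s} (\<lambda>y. kerK eps lam s y * uh y t)) has_real_derivative
        uhx x t - (Kt c x x * uh x t + integral {0..x} (\<lambda>y. Ktx c x y * uh y t))) (at x within {0..1})"
      by (rule has_field_derivative_transform_within[OF d1 zero_less_one x]) (use eqwh in auto)
    have dd: "((\<lambda>s. - c * s / 2) has_real_derivative - c / 2) (at x within {0..1})"
      by (auto intro!: derivative_eq_intros)
    have kd: "(\<lambda>s. Kt c s s * uh s t) = (\<lambda>s. (- c * s / 2) * uh s t)" by (simp add: Kt_diag fun_eq_iff)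
    have kd2: "((\<lambda>s. Kt c s s * uh s t) has_real_derivative (- c / 2) * uh x t + (- c * x / 2) * uhx x t) (at x within {0..1})"
      using DERIV_mult[OF dd Dx[OF x t]] unfolding kd by (simp only: mult.commute[of "uhx x t"])
    show "((\<lambda>s. uhx s t - (Kt c s s * uh s t + integral {0..s} (\<lambda>y. Ktx c s y * uh y t))) has_real_derivative
        uhxx x t - ((- c / 2) * uh x t + (- c * x / 2) * uhx x t + (Ktx c x x * uh x t + integral {0..x} (\<lambda>y. Ktxx c x y * uh y t)))) (at x within {0..1})"
      by (intro DERIV_diff DERIV_add Dxx[OF x t] kd2 int_dx[OF Ktx_dx[where S=UNIV] Ktx_contU Ktxx_contU cs1 x])
    have xs: "{0..x} \<subseteq> {0..1}" using x by auto
    have li: "((\<lambda>s. integral (cbox 0 x) (\<lambda>y. Kt c x y * uh y s)) has_real_derivative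
          integral (cbox 0 x) (\<lambda>y. Kt c x y * uht y t)) (at t within {0<..})"
    proof (rule leibniz_rule_field_derivative)
      show "((\<lambda>s. Kt c x y * uh y s) has_real_derivative Kt c x y * uht y s) (at s within {0<..})"
        if "s \<in> {0<..}" "y \<in> cbox 0 x" for s y
        by (rule DERIV_cmult, rule has_field_derivative_at_within, rule Dt) (use that xs in auto)
      show "(\<lambda>y. Kt c x y * uh y s) integrable_on cbox 0 x" if "s \<in> {0<..}" for s
        using contK_int[OF cont_sec[OF cuh] Kt_contU x] that by simp
      have "continuous_on ({0<..} \<times> cbox 0 x) (\<lambda>p. (\<lambda>(x,t). uht x t) (snd p, fst p))"
        by (rule continuous_on_compose2[OF cuht]) (use xs in \<open>auto intro!: continuous_intros\<close>)
      moreover have "continuous_on ({0<..} \<times> cbox 0 x) (\<lambda>p. Kt c x (snd p))"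
        by (intro continuous_intros)
      ultimately show "continuous_on ({0<..} \<times> cbox 0 x) (\<lambda>(s, y). Kt c x y * uht y s)"
        by (auto simp: split_beta intro!: continuous_intros)
    qed (use t in auto)
    have li2: "((\<lambda>s. integral {0..x} (\<lambda>y. Kt c x y * uh y s)) has_real_derivative
          integral {0..x} (\<lambda>y. Kt c x y * uht y t)) (at t)"
    proof -
      have atw: "at t within {0<..} = at t" by (rule at_within_open) (use t in auto)
      show ?thesis using li unfolding atw by (simp only: cbox_interval)
    qed
    show "((\<lambda>s. uh x s - integral {0..x} (\<lambda>y. kerK eps lam x y * uh y s)) has_real_derivative
        uht x t - integral {0..x} (\<lambda>y. Kt c x y * uht y t)) (at t)"
      unfolding eqwh[of x, OF conjunct1[OF x[simplified]]]
      by (intro DERIV_diff Dt[OF x t] li2)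
  next
    show "continuous_on ({0..1} \<times> {0<..}) (\<lambda>(x, t). uh x t - integral {0..x} (\<lambda>y. kerK eps lam x y * uh y t))"
    proof (rule continuous_on_eq)
      show "continuous_on ({0..1} \<times> {0<..}) (\<lambda>p. uh (fst p) (snd p) - integral {0..fst p} (\<lambda>y. Kt c (fst p) y * uh y (snd p)))"
        by (intro continuous_on_diff cont_fs[OF cuh] vc'[OF cuh Kt_contU])
    qed (auto simp: eqwh)
    show "continuous_on ({0..1} \<times> {0<..}) (\<lambda>(x, t). uhx x t - (Kt c x x * uh x t + integral {0..x} (\<lambda>y. Ktx c x y * uh y t)))"
      using continuous_on_diff[OF cont_fs[OF cuhx] continuous_on_add[OF continuous_on_mult[OF Kt_cont[OF continuous_on_fst[OF continuous_on_id] continuous_on_fst[OF continuous_on_id]] cont_fs[OF cuh]] vc'[OF cuh Ktx_contU]]]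
      by (simp add: split_beta)
    have cxu: "continuous_on ({0..1} \<times> {0<..}) (\<lambda>p. (- c * fst p / 2) * uhx (fst p) (snd p))"
      by (intro continuous_on_mult cont_fs[OF cuhx]) (auto intro!: continuous_intros)
    have cu2: "continuous_on ({0..1} \<times> {0<..}) (\<lambda>p. (- c / 2) * uh (fst p) (snd p))"
      by (intro continuous_on_mult cont_fs[OF cuh] continuous_on_const)
    show "continuous_on ({0..1} \<times> {0<..}) (\<lambda>(x, t). uhxx x t - ((- c / 2) * uh x t + (- c * x / 2) * uhx x t + (Ktx c x x * uh x t + integral {0..x} (\<lambda>y. Ktxx c x y * uh y t))))"
      using continuous_on_diff[OF cont_fs[OF cuhxx] continuous_on_add[OF continuous_on_add[OF cu2 cxu] continuous_on_add[OF continuous_on_mult[OF Ktx_cont[OF continuous_on_fst[OF continuous_on_id] continuous_on_fst[OF continuous_on_id]] cont_fs[OF cuh]] vc'[OF cuh Ktxx_contU]]]]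
      by (simp add: split_beta)
    show "continuous_on ({0..1} \<times> {0<..}) (\<lambda>(x, t). uht x t - integral {0..x} (\<lambda>y. Kt c x y * uht y t))"
      using continuous_on_diff[OF cont_fs[OF cuht] vc'[OF cuht Kt_contU]]
      by (simp add: split_beta)
  qed
qed



lemma Ktyy_contU: "continuous_on UNIV (\<lambda>(a,y). Ktyy c a y)"
  unfolding split_beta by (intro continuous_intros)

lemma pde_point:
  fixes eps lam c q :: real and u uh uhx uhxx uht :: "real \<Rightarrow> real \<Rightarrow> real"
  assumes ep: "eps > 0" and lp: "lam > 0" and cdef: "c = lam / eps"
  and chu: "classical_sol uh uhx uhxx uht"
  and pdeI: "\<And>y. y \<in> {0<..<1} \<Longrightarrow> uht y t = eps * uhxx y t + lam * uh y t + obs_p1 eps lam q y * (u 0 t - uh 0 t)"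
  and bc0: "uhx 0 t = - (lam / (2 * eps)) * (u 0 t - uh 0 t)"
  and x: "x \<in> {0<..<1}" and t: "t > 0"
  shows "uht x t - integral {0..x} (\<lambda>y. Kt c x y * uht y t)
       = eps * (uhxx x t - ((- c / 2) * uh x t + (- c * x / 2) * uhx x t + (Ktx c x x * uh x t + integral {0..x} (\<lambda>y. Ktxx c x y * uh y t))))
         + gfun eps lam q x * (u 0 t - uh 0 t)"
proof -
  define c0 where "c0 = u 0 t - uh 0 t"
  define p1 where "p1 = obs_p1 eps lam q"
  have l0: "lam \<ge> 0" using lp by simp
  have lamc: "lam = eps * c" using ep cdef by simp
  note cs = chu[unfolded classical_sol_def]
  have x01: "x \<in> {0..1}" using x by auto
  have xs: "{0..x} \<subseteq> {0..1}" using x by auto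
  have Dx: "((\<lambda>s. uh s t) has_real_derivative uhx y t) (at y within {0..x})"
   and Dxx: "((\<lambda>s. uhx s t) has_real_derivative uhxx y t) (at y within {0..x})"
    if "y \<in> {0..x}" for y
  proof -
    have y1: "y \<in> {0..1}" using that xs by auto
    show "((\<lambda>s. uh s t) has_real_derivative uhx y t) (at y within {0..x})"
      by (rule DERIV_subset[OF _ xs]) (use cs t y1 in blast)
    show "((\<lambda>s. uhx s t) has_real_derivative uhxx y t) (at y within {0..x})"
      by (rule DERIV_subset[OF _ xs]) (use cs t y1 in blast)
  qed
  have cs1: "continuous_on {0..1} (\<lambda>x. uh x t)" by (rule cont_sec[OF _ t]) (use cs in auto)
  have cs2: "continuous_on {0..1} (\<lambda>x. uhx x t)" by (rule cont_sec[OF _ t]) (use cs in auto)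
  have cs3: "continuous_on {0..1} (\<lambda>x. uhxx x t)" by (rule cont_sec[OF _ t]) (use cs in auto)
  have cs4: "continuous_on {0..1} (\<lambda>x. uht x t)" by (rule cont_sec[OF _ t]) (use cs in auto)
  have i1: "(\<lambda>y. Kt c x y * uh y t) integrable_on {0..x}" by (rule contK_int[OF cs1 Kt_contU x01])
  have i2: "(\<lambda>y. Kt c x y * uhxx y t) integrable_on {0..x}" by (rule contK_int[OF cs3 Kt_contU x01])
  have i3: "(\<lambda>y. Kt c x y * uht y t) integrable_on {0..x}" by (rule contK_int[OF cs4 Kt_contU x01])
  have i4: "(\<lambda>y. Ktyy c x y * uh y t) integrable_on {0..x}" by (rule contK_int[OF cs1 Ktyy_contU x01])
  have i5: "(\<lambda>y. Ktxx c x y * uh y t) integrable_on {0..x}" by (rule contK_int[OF cs1 Ktxx_contU x01])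
  define A where "A = integral {0..x} (\<lambda>y. Kt c x y * uhxx y t)"
  define B where "B = integral {0..x} (\<lambda>y. Kt c x y * uh y t)"
  define E where "E = integral {0..x} (\<lambda>y. Ktyy c x y * uh y t)"
  define G where "G = integral {0..x} (\<lambda>y. Ktxx c x y * uh y t)"
  define H where "H = integral {0..x} (\<lambda>y. Kt c x y * uht y t)"
  define Cc where "Cc = integral {0..x} (\<lambda>y. Kt c x y * p1 y)"
  define \<phi> where "\<phi> y = Kt c x y * uhx y t - Kty c x y * uh y t" for y
  have F1: "((\<lambda>y. Kt c x y * uhxx y t - Ktyy c x y * uh y t) has_integral (\<phi> x - \<phi> 0)) {0..x}"
  proof (rule fundamental_theorem_of_calculus)
    show "0 \<le> x" using x by simp
    fix y assume y: "y \<in> {0..x}"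
    have "(\<phi> has_real_derivative (Kt c x y * uhxx y t - Ktyy c x y * uh y t)) (at y within {0..x})"
      unfolding \<phi>_def by (rule DERIV_cong[OF DERIV_diff[OF DERIV_mult[OF Kt_dy Dxx[OF y]] DERIV_mult[OF Kty_dy Dx[OF y]]]]) (simp add: algebra_simps)
    then show "(\<phi> has_vector_derivative (Kt c x y * uhxx y t - Ktyy c x y * uh y t)) (at y within {0..x})"
      unfolding has_real_derivative_iff_has_vector_derivative[symmetric] .
  qed
  have AE: "A - E = \<phi> x - \<phi> 0"
    using integral_unique[OF F1] integral_diff[OF i2 i4] unfolding A_def E_def by simp
  have GE: "G = E + c * B"
  proof -
    have "G = integral {0..x} (\<lambda>y. Ktyy c x y * uh y t + c * (Kt c x y * uh y t))"
      unfolding G_def by (rule integral_cong) (use Kt_pde[of c x] in \<open>simp add: algebra_simps\<close>)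
    also have "\<dots> = E + c * B"
      unfolding E_def B_def by (subst integral_add[OF i4]) (use i1 in \<open>auto intro: integrable_on_mult_right\<close>)
    finally show ?thesis .
  qed
  define R where "R y = Kt c x y * uht y t - (eps * (Kt c x y * uhxx y t) + lam * (Kt c x y * uh y t))" for y
  have iR: "R integrable_on {0..x}" unfolding R_def
    by (intro integrable_diff integrable_add integrable_on_mult_right i1 i2 i3)
  have intR: "integral {0..x} R = H - (eps * A + lam * B)"
    unfolding R_def H_def A_def B_def
    by (subst integral_diff[OF i3], intro integrable_add integrable_on_mult_right i1 i2,
        subst integral_add, auto intro: integrable_on_mult_right i1 i2)
  have intR2: "integral {0..x} R = c0 * Cc"
  proof -
    have "integral {0..x} R = integral {0..x} (\<lambda>y. c0 * (Kt c x y * p1 y))"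
    proof (rule integral_spike[where S="{0}"])
      fix y assume y: "y \<in> {0..x} - {0}"
      then have "y \<in> {0<..<1}" using x by auto
      show "c0 * (Kt c x y * p1 y) = R y"
        unfolding R_def c0_def p1_def pdeI[OF \<open>y \<in> {0<..<1}\<close>] by (simp add: algebra_simps)
    qed simp
    then show ?thesis unfolding Cc_def by simp
  qed
  have gf: "gfun eps lam q x = p1 x - lam / 2 * Kt c x 0 - Cc"
    unfolding gfun_def p1_def Cc_def
    using kerK_Kt'[OF ep l0, of 0 x] int_cong_K'[OF ep l0 _ cdef, of x "obs_p1 eps lam q"] x cdef by simp
  have pdx: "uht x t = eps * uhxx x t + lam * uh x t + p1 x * c0"
    using pdeI[OF x] unfolding p1_def c0_def .
  have bc: "uhx 0 t = - (c / 2) * c0" using bc0 cdef unfolding c0_def by simp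
  have kxx: "Ktx c x x = - c / 2 - Kty c x x" using Ktxy_diag[of c x] by simp
  have \<phi>x: "\<phi> x = - c * x / 2 * uhx x t - Kty c x x * uh x t" unfolding \<phi>_def Kt_diag by simp
  have \<phi>0: "\<phi> 0 = Kt c x 0 * uhx 0 t" unfolding \<phi>_def Kty_0 by simp
  have HH: "H = eps * A + lam * B + c0 * Cc" using intR intR2 by simp
  have AA: "A = E + \<phi> x - \<phi> 0" using AE by simp
  show ?thesis
    unfolding H_def[symmetric] G_def[symmetric] gf c0_def[symmetric] pdx HH AA GE \<phi>x \<phi>0 bc kxx
    by (simp add: lamc algebra_simps)
qed



lemma Ktx_contU': "continuous_on UNIV (\<lambda>(a,y). Ktx c a y)" by (rule Ktx_contU)

lemma bdry1:
  fixes eps lam c q :: real and uh uhx uhxx uht :: "real \<Rightarrow> real \<Rightarrow> real" and U :: "real \<Rightarrow> real"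
  assumes ep: "eps > 0" and lp: "lam > 0" and cdef: "c = lam / eps"
  and chu: "classical_sol uh uhx uhxx uht"
  and bc1: "uhx 1 t + q * uh 1 t = U t"
  and Ul: "U t = integral {0..1} (\<lambda>y. ((q - lam / (2 * eps)) * kerK eps lam 1 y + deriv (\<lambda>s. kerK eps lam s y) 1) * uh y t)"
  and t: "t > 0"
  shows "uhx 1 t - (Kt c 1 1 * uh 1 t + integral {0..1} (\<lambda>y. Ktx c 1 y * uh y t))
       = - (q - lam / (2 * eps)) * (uh 1 t - integral {0..1} (\<lambda>y. kerK eps lam 1 y * uh y t))"
proof -
  define r where "r = q - lam / (2 * eps)"
  have l0: "lam \<ge> 0" using lp by simp
  have rc: "r = q - c / 2" unfolding r_def cdef by simp
  note cs = chu[unfolded classical_sol_def]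
  have cs1: "continuous_on {0..1} (\<lambda>x. uh x t)" by (rule cont_sec[OF _ t]) (use cs in auto)
  have one: "(1::real) \<in> {0..1}" by simp
  have i1: "(\<lambda>y. Kt c 1 y * uh y t) integrable_on {0..1}" using contK_int[OF cs1 Kt_contU one] by simp
  have i2: "(\<lambda>y. Ktx c 1 y * uh y t) integrable_on {0..1}" using contK_int[OF cs1 Ktx_contU one] by simp
  define B1 where "B1 = integral {0..1} (\<lambda>y. Kt c 1 y * uh y t)"
  define D1 where "D1 = integral {0..1} (\<lambda>y. Ktx c 1 y * uh y t)"
  have UU: "U t = r * B1 + D1"
  proof -
    have "U t = integral {0..1} (\<lambda>y. r * (Kt c 1 y * uh y t) + Ktx c 1 y * uh y t)"
      unfolding Ul r_def[symmetric]
    proof (rule integral_spike[where S="{1}"])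
      fix y :: real assume y: "y \<in> {0..1} - {1}"
      have k1: "kerK eps lam 1 y = Kt c 1 y" using y cdef by (auto intro!: kerK_Kt'[OF ep l0])
      have yin: "1 \<in> {y<..}" using y by auto
      have eq: "Kt c s y = kerK eps lam s y" if "s \<in> {y<..}" for s
        using that y cdef by (auto intro!: kerK_Kt'[OF ep l0, symmetric])
      have "((\<lambda>s. kerK eps lam s y) has_real_derivative Ktx c 1 y) (at 1)"
        by (rule has_field_derivative_transform_within_open[OF Kt_dx _ yin]) (use eq in auto)
      then have d1: "deriv (\<lambda>s. kerK eps lam s y) 1 = Ktx c 1 y" by (rule DERIV_imp_deriv)
      show "r * (Kt c 1 y * uh y t) + Ktx c 1 y * uh y t = (r * kerK eps lam 1 y + deriv (\<lambda>s. kerK eps lam s y) 1) * uh y t"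
        unfolding k1 d1 by (simp add: algebra_simps)
    qed simp
    also have "\<dots> = r * B1 + D1"
      unfolding B1_def D1_def by (subst integral_add) (use i1 i2 in \<open>auto intro: integrable_on_mult_right\<close>)
    finally show ?thesis .
  qed
  have KB: "integral {0..1} (\<lambda>y. kerK eps lam 1 y * uh y t) = B1"
    unfolding B1_def by (rule int_cong_K'[OF ep l0 _ cdef]) simp
  have ux1: "uhx 1 t = U t - q * uh 1 t" using bc1 by simp
  show ?thesis
    unfolding KB r_def[symmetric] D1_def[symmetric] ux1 UU Kt_diag rc by (simp add: field_simps)
qed



lemma main:
  fixes eps lam q :: real and u ux uxx ut uh uhx uhxx uht wt :: "real \<Rightarrow> real \<Rightarrow> real" and U :: "real \<Rightarrow> real"
  assumes ep: "eps > 0" and lp: "lam > 0"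
  and chu: "classical_sol uh uhx uhxx uht"
  and pde: "\<forall>t>0. (\<forall>x\<in>{0<..<1}. uht x t = eps * uhxx x t + lam * uh x t
                                       + obs_p1 eps lam q x * (u 0 t - uh 0 t)) \<and>
                uhx 0 t = - (lam / (2 * eps)) * (u 0 t - uh 0 t) \<and>
                uhx 1 t + q * uh 1 t = U t"
  and Ul: "\<forall>t>0. U t = integral {0..1}
                  (\<lambda>y. ((q - lam / (2 * eps)) * kerK eps lam 1 y + deriv (\<lambda>s. kerK eps lam s y) 1) * uh y t)"
  and wtr: "\<forall>t>0. \<forall>x\<in>{0..1}. u x t - uh x t
                  = wt x t - integral {0..x} (\<lambda>y. kerP eps lam q x y * wt y t)"
  shows "\<exists>whx whxx wht. classical_sol (\<lambda>x t. uh x t - integral {0..x} (\<lambda>y. kerK eps lam x y * uh y t)) whx whxx wht \<and>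
            (\<forall>t>0. (\<forall>x\<in>{0<..<1}. wht x t = eps * whxx x t + gfun eps lam q x * wt 0 t) \<and>
                   whx 0 t = - (lam / (2 * eps)) * wt 0 t \<and>
                   whx 1 t = - (q - lam / (2 * eps)) * (uh 1 t - integral {0..1} (\<lambda>y. kerK eps lam 1 y * uh y t)))"
proof -
  define c where "c = lam / eps"
  have w0: "wt 0 t = u 0 t - uh 0 t" if "t > 0" for t
    using wtr that by force
  show ?thesis
  proof (intro exI conjI allI impI ballI)
    show "classical_sol (\<lambda>x t. uh x t - integral {0..x} (\<lambda>y. kerK eps lam x y * uh y t))
     (\<lambda>x t. uhx x t - (Kt c x x * uh x t + integral {0..x} (\<lambda>y. Ktx c x y * uh y t)))
     (\<lambda>x t. uhxx x t - ((- c / 2) * uh x t + (- c * x / 2) * uhx x t + (Ktx c x x * uh x t + integral {0..x} (\<lambda>y. Ktxx c x y * uh y t))))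
     (\<lambda>x t. uht x t - integral {0..x} (\<lambda>y. Kt c x y * uht y t))"
      by (rule reg[OF ep lp c_def chu])
  next
    fix t x :: real assume t: "t > 0" and x: "x \<in> {0<..<1}"
    show "uht x t - integral {0..x} (\<lambda>y. Kt c x y * uht y t)
       = eps * (uhxx x t - ((- c / 2) * uh x t + (- c * x / 2) * uhx x t + (Ktx c x x * uh x t + integral {0..x} (\<lambda>y. Ktxx c x y * uh y t))))
         + gfun eps lam q x * wt 0 t"
      unfolding w0[OF t]
      by (rule pde_point[OF ep lp c_def chu _ _ x t]) (use pde t in auto)
  next
    fix t :: real assume t: "t > 0"
    show "uhx 0 t - (Kt c 0 0 * uh 0 t + integral {0..0} (\<lambda>y. Ktx c 0 y * uh y t)) = - (lam / (2 * eps)) * wt 0 t"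
      using pde t w0[OF t] by (simp add: Kt_diag)
    show "uhx 1 t - (Kt c 1 1 * uh 1 t + integral {0..1} (\<lambda>y. Ktx c 1 y * uh y t))
       = - (q - lam / (2 * eps)) * (uh 1 t - integral {0..1} (\<lambda>y. kerK eps lam 1 y * uh y t))"
      by (rule bdry1[OF ep lp c_def chu _ _ t]) (use pde Ul t in auto)
  qed
qed

theorem proposition2:
  fixes eps lam q :: real
  assumes "eps > 0" and "lam > 0"
  shows
   "(\<forall>x y. 0 < y \<and> y < x \<and> x < 1 \<longrightarrow>
       (\<lambda>s. kerK eps lam s y) differentiable (at x) \<and>
       (\<lambda>s. deriv (\<lambda>s'. kerK eps lam s' y) s) differentiable (at x) \<and>
       (\<lambda>s. kerK eps lam x s) differentiable (at y) \<and>
       (\<lambda>s. deriv (\<lambda>s'. kerK eps lam x s') s) differentiable (at y) \<and>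
       deriv (\<lambda>s. deriv (\<lambda>s'. kerK eps lam s' y) s) x
         - deriv (\<lambda>s. deriv (\<lambda>s'. kerK eps lam x s') s) y
         = lam / eps * kerK eps lam x y)
    \<and> (\<forall>x\<in>{0..1}. (\<lambda>s. kerK eps lam x s) differentiable (at 0) \<and>
                    deriv (\<lambda>s. kerK eps lam x s) 0 = 0)
    \<and> (\<forall>x\<in>{0..1}. kerK eps lam x x = - (lam / (2 * eps)) * x)
    \<and> (\<forall>u ux uxx ut uh uhx uhxx uht wt (U :: real \<Rightarrow> real).
         let r = q - lam / (2 * eps) in
         classical_sol u ux uxx ut \<and>
         (\<forall>t>0. (\<forall>x\<in>{0<..<1}. ut x t = eps * uxx x t + lam * u x t) \<and>
                ux 0 t = 0 \<and> ux 1 t + q * u 1 t = U t) \<and>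
         classical_sol uh uhx uhxx uht \<and>
         (\<forall>t>0. (\<forall>x\<in>{0<..<1}. uht x t = eps * uhxx x t + lam * uh x t
                                       + obs_p1 eps lam q x * (u 0 t - uh 0 t)) \<and>
                uhx 0 t = - (lam / (2 * eps)) * (u 0 t - uh 0 t) \<and>
                uhx 1 t + q * uh 1 t = U t) \<and>
         (\<forall>t>0. U t = integral {0..1}
                  (\<lambda>y. (r * kerK eps lam 1 y + deriv (\<lambda>s. kerK eps lam s y) 1) * uh y t)) \<and>
         (\<forall>t>0. \<forall>x\<in>{0..1}. u x t - uh x t
                  = wt x t - integral {0..x} (\<lambda>y. kerP eps lam q x y * wt y t))
         \<longrightarrow>
         (let wh = (\<lambda>x t. uh x t - integral {0..x} (\<lambda>y. kerK eps lam x y * uh y t)) in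
          \<exists>whx whxx wht. classical_sol wh whx whxx wht \<and>
            (\<forall>t>0. (\<forall>x\<in>{0<..<1}. wht x t = eps * whxx x t + gfun eps lam q x * wt 0 t) \<and>
                   whx 0 t = - (lam / (2 * eps)) * wt 0 t \<and>
                   whx 1 t = - r * wh 1 t)))"
proof -
  have P4: "\<forall>u ux uxx ut uh uhx uhxx uht wt (U :: real \<Rightarrow> real).
         let r = q - lam / (2 * eps) in
         classical_sol u ux uxx ut \<and>
         (\<forall>t>0. (\<forall>x\<in>{0<..<1}. ut x t = eps * uxx x t + lam * u x t) \<and>
                ux 0 t = 0 \<and> ux 1 t + q * u 1 t = U t) \<and>
         classical_sol uh uhx uhxx uht \<and>
         (\<forall>t>0. (\<forall>x\<in>{0<..<1}. uht x t = eps * uhxx x t + lam * uh x t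
                                       + obs_p1 eps lam q x * (u 0 t - uh 0 t)) \<and>
                uhx 0 t = - (lam / (2 * eps)) * (u 0 t - uh 0 t) \<and>
                uhx 1 t + q * uh 1 t = U t) \<and>
         (\<forall>t>0. U t = integral {0..1}
                  (\<lambda>y. (r * kerK eps lam 1 y + deriv (\<lambda>s. kerK eps lam s y) 1) * uh y t)) \<and>
         (\<forall>t>0. \<forall>x\<in>{0..1}. u x t - uh x t
                  = wt x t - integral {0..x} (\<lambda>y. kerP eps lam q x y * wt y t))
         \<longrightarrow>
         (let wh = (\<lambda>x t. uh x t - integral {0..x} (\<lambda>y. kerK eps lam x y * uh y t)) in
          \<exists>whx whxx wht. classical_sol wh whx whxx wht \<and>
            (\<forall>t>0. (\<forall>x\<in>{0<..<1}. wht x t = eps * whxx x t + gfun eps lam q x * wt 0 t) \<and>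
                   whx 0 t = - (lam / (2 * eps)) * wt 0 t \<and>
                   whx 1 t = - r * wh 1 t))"
    unfolding Let_def
    apply (intro allI impI)
    apply (elim conjE)
    apply (rule main[OF assms])
       apply assumption+
    done
  show ?thesis using part123[OF assms] P4 by blast
qed


end
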